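(* Let $(\mathcal{E},\mathcal{L},\mathcal{B})$ be a weakly left resolving labelled space with associated inverse semigroup $S$, let $\xi$ be a filter in $E(S)$ of finite type with word $\alpha\in\mathcal{L}^*$, and for $0\le n\le|\alpha|$ let $\mathcal{F}_n=\{A\in\mathcal{B}:(\alpha_{1,n},A,\alpha_{1,n})\in\xi\}$. Then (i) $\mathcal{F}_n$ is a filter in $\mathcal{B}_{\alpha_{1,n}}$ for every $1\le n\le|\alpha|$, and $\mathcal{F}_0$ is either empty or a filter in $\mathcal{B}$; (ii) $\mathcal{F}_n=\{A\in\mathcal{B}_{\alpha_{1,n}}: r(A,\alpha_{n+1,m})\in\mathcal{F}_m\}$ for all $0\le n<m\le|\alpha|$.
   Context: A directed graph $\mathcal{E}=(\mathcal{E}^0,\mathcal{E}^1,r,s)$ has countable nonempty vertex set, edge set, range/source maps; paths satisfy $r(\lambda_i)=s(\lambda_{i+1})$. A labelled graph has a surjective labelling $\mathcal{L}:\mathcal{E}^1\to\mathcal{A}$ extended letterwise to paths. $\omega$ is the empty word, $\mathcal{L}^+=\bigcup_{n\ge1}\mathcal{L}(\mathcal{E}^n)$, $\mathcal{L}^*=\{\omega\}\cup\mathcal{L}^+$; $\alpha_{i,j}=\alpha_i\cdots\alpha_j$, $\alpha_{1,0}=\omega$. For $A\subseteq\mathcal{E}^0$, $\alpha\in\mathcal{L}^+$: $r(A,\alpha)=\{r(\lambda):\mathcal{L}(\lambda)=\alpha,\ s(\lambda)\in A\}$, $r(A,\omega)=A$, $r(\alpha)=r(\mathcal{E}^0,\alpha)$.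 $\mathcal{B}$ accommodating: closed under $r(\cdot,\alpha)$, finite intersections and unions, contains $r(\alpha)$ for $\alpha\in\mathcal{L}^+$; labelled space weakly left resolving if $r(A\cap B,\alpha)=r(A,\alpha)\cap r(B,\alpha)$ for $A,B\in\mathcal{B}$, $\alpha\in\mathcal{L}^+$. $\mathcal{B}_\alpha=\mathcal{B}\cap\mathcal{P}(r(\alpha))$. $S$ = triples $(\alpha,A,\beta)$, $\alpha,\beta\in\mathcal{L}^*$, $\emptyset\ne A\in\mathcal{B}_\alpha\cap\mathcal{B}_\beta$, plus $0$; product $(\alpha,A,\beta)(\gamma,B,\delta)=(\alpha\gamma',r(A,\gamma')\cap B,\delta)$ if $\gamma=\beta\gamma'$, $=(\alpha,A\cap r(B,\beta'),\delta\beta')$ if $\beta=\gamma\beta'$, $=0$ otherwise (empty middle entry identified with $0$). $E(S)=\{(\alpha,A,\alpha)\}\cup\{0\}$, $p\le q$ iff $pq=p$; $(\alpha,A,\alpha)\le(\beta,B,\beta)$ iff $\alpha=\beta\alpha'$ and $A\subseteq r(B,\alpha')$. A filter in a poset with least element $0$ is a nonempty upward-closed subset not containing $0$ in which any two elements have a common lower bound in it; filters in $\mathcal{B}_\alpha$ are under inclusion. The words of any two elements of a filter in $E(S)$ are comparable; a filter $\xi$ is of finite type if among the words $\beta$ with $(\beta,B,\beta)\in\xi$ there is one of largest length, called the word of $\xi$. *)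

theory Defs
  imports Main "HOL-Library.Countable_Set"
begin

text \<open>A labelled graph additionally has a labelling lab (the alphabet is
the image lab ` Ed, so surjectivity is automatic).  Words are lists of labels;
the empty word is the empty list.\<close>

definition directed_graph :: "'v set \<Rightarrow> 'e set \<Rightarrow> ('e \<Rightarrow> 'v) \<Rightarrow> ('e \<Rightarrow> 'v) \<Rightarrow> bool" where
  "directed_graph V Ed rg sc \<longleftrightarrow> V \<noteq> {} \<and> countable V \<and> countable Ed \<and>
     (\<forall>e\<in>Ed. rg e \<in> V \<and> sc e \<in> V)"

definition is_path :: "'e set \<Rightarrow> ('e \<Rightarrow> 'v) \<Rightarrow> ('e \<Rightarrow> 'v) \<Rightarrow> 'e list \<Rightarrow> bool" where
  "is_path Ed rg sc p \<longleftrightarrow> p \<noteq> [] \<and> set p \<subseteq> Ed \<and>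
     (\<forall>i. Suc i < length p \<longrightarrow> rg (p ! i) = sc (p ! Suc i))"

definition Lplus :: "'e set \<Rightarrow> ('e \<Rightarrow> 'v) \<Rightarrow> ('e \<Rightarrow> 'v) \<Rightarrow> ('e \<Rightarrow> 'a) \<Rightarrow> 'a list set" where
  "Lplus Ed rg sc lab = {map lab p | p. is_path Ed rg sc p}"

definition Lstar :: "'e set \<Rightarrow> ('e \<Rightarrow> 'v) \<Rightarrow> ('e \<Rightarrow> 'v) \<Rightarrow> ('e \<Rightarrow> 'a) \<Rightarrow> 'a list set" where
  "Lstar Ed rg sc lab = insert [] (Lplus Ed rg sc lab)"

definition relr :: "'e set \<Rightarrow> ('e \<Rightarrow> 'v) \<Rightarrow> ('e \<Rightarrow> 'v) \<Rightarrow> ('e \<Rightarrow> 'a) \<Rightarrow> 'v set \<Rightarrow> 'a list \<Rightarrow> 'v set" where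
  "relr Ed rg sc lab A w = (if w = [] then A else
     {rg (last p) | p. is_path Ed rg sc p \<and> map lab p = w \<and> sc (hd p) \<in> A})"

definition Bsub :: "'v set \<Rightarrow> 'e set \<Rightarrow> ('e \<Rightarrow> 'v) \<Rightarrow> ('e \<Rightarrow> 'v) \<Rightarrow> ('e \<Rightarrow> 'a) \<Rightarrow> 'v set set \<Rightarrow> 'a list \<Rightarrow> 'v set set" where
  "Bsub V Ed rg sc lab B w = {A \<in> B. A \<subseteq> relr Ed rg sc lab V w}"

definition accommodating :: "'v set \<Rightarrow> 'e set \<Rightarrow> ('e \<Rightarrow> 'v) \<Rightarrow> ('e \<Rightarrow> 'v) \<Rightarrow> ('e \<Rightarrow> 'a) \<Rightarrow> 'v set set \<Rightarrow> bool" where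
  "accommodating V Ed rg sc lab B \<longleftrightarrow> B \<subseteq> Pow V \<and>
     (\<forall>A\<in>B. \<forall>w\<in>Lplus Ed rg sc lab. relr Ed rg sc lab A w \<in> B) \<and>
     (\<forall>A\<in>B. \<forall>C\<in>B. A \<inter> C \<in> B \<and> A \<union> C \<in> B) \<and>
     (\<forall>w\<in>Lplus Ed rg sc lab. relr Ed rg sc lab V w \<in> B)"

definition labelled_space :: "'v set \<Rightarrow> 'e set \<Rightarrow> ('e \<Rightarrow> 'v) \<Rightarrow> ('e \<Rightarrow> 'v) \<Rightarrow> ('e \<Rightarrow> 'a) \<Rightarrow> 'v set set \<Rightarrow> bool" where
  "labelled_space V Ed rg sc lab B \<longleftrightarrow> directed_graph V Ed rg sc \<and> accommodating V Ed rg sc lab B"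

definition weakly_left_resolving :: "'v set \<Rightarrow> 'e set \<Rightarrow> ('e \<Rightarrow> 'v) \<Rightarrow> ('e \<Rightarrow> 'v) \<Rightarrow> ('e \<Rightarrow> 'a) \<Rightarrow> 'v set set \<Rightarrow> bool" where
  "weakly_left_resolving V Ed rg sc lab B \<longleftrightarrow> labelled_space V Ed rg sc lab B \<and>
     (\<forall>A\<in>B. \<forall>C\<in>B. \<forall>w\<in>Lplus Ed rg sc lab.
        relr Ed rg sc lab (A \<inter> C) w = relr Ed rg sc lab A w \<inter> relr Ed rg sc lab C w)"

text \<open>Elements of the inverse semigroup S: None is 0, Some (a, A, b) is the triple.\<close>
type_synonym ('a, 'v) selt = "('a list \<times> 'v set \<times> 'a list) option"

definition S_set :: "'v set \<Rightarrow> 'e set \<Rightarrow> ('e \<Rightarrow> 'v) \<Rightarrow> ('e \<Rightarrow> 'v) \<Rightarrow> ('e \<Rightarrow> 'a) \<Rightarrow> 'v set set \<Rightarrow> ('a, 'v) selt set" where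
  "S_set V Ed rg sc lab B = insert None
     {Some (a, A, b) | a A b. a \<in> Lstar Ed rg sc lab \<and> b \<in> Lstar Ed rg sc lab \<and> A \<noteq> {} \<and>
        A \<in> Bsub V Ed rg sc lab B a \<and> A \<in> Bsub V Ed rg sc lab B b}"

text \<open>The product of S (an empty middle entry is identified with 0).\<close>
fun smult :: "'e set \<Rightarrow> ('e \<Rightarrow> 'v) \<Rightarrow> ('e \<Rightarrow> 'v) \<Rightarrow> ('e \<Rightarrow> 'a) \<Rightarrow> ('a, 'v) selt \<Rightarrow> ('a, 'v) selt \<Rightarrow> ('a, 'v) selt" where
  "smult Ed rg sc lab (Some (a, A, b)) (Some (c, C, d)) =
     (if \<exists>c'. c = b @ c' then
        (let c' = drop (length b) c; D = relr Ed rg sc lab A c' \<inter> C in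
         if D = {} then None else Some (a @ c', D, d))
      else if \<exists>b'. b = c @ b' then
        (let b' = drop (length c) b; D = A \<inter> relr Ed rg sc lab C b' in
         if D = {} then None else Some (a, D, d @ b'))
      else None)"
| "smult Ed rg sc lab _ _ = None"

definition ES_set :: "'v set \<Rightarrow> 'e set \<Rightarrow> ('e \<Rightarrow> 'v) \<Rightarrow> ('e \<Rightarrow> 'v) \<Rightarrow> ('e \<Rightarrow> 'a) \<Rightarrow> 'v set set \<Rightarrow> ('a, 'v) selt set" where
  "ES_set V Ed rg sc lab B = {p \<in> S_set V Ed rg sc lab B. p = None \<or> (\<exists>a A. p = Some (a, A, a))}"

definition ES_le :: "'e set \<Rightarrow> ('e \<Rightarrow> 'v) \<Rightarrow> ('e \<Rightarrow> 'v) \<Rightarrow> ('e \<Rightarrow> 'a) \<Rightarrow> ('a, 'v) selt \<Rightarrow> ('a, 'v) selt \<Rightarrow> bool" where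
  "ES_le Ed rg sc lab p q \<longleftrightarrow> smult Ed rg sc lab p q = p"

definition is_filter :: "'x set \<Rightarrow> ('x \<Rightarrow> 'x \<Rightarrow> bool) \<Rightarrow> 'x \<Rightarrow> 'x set \<Rightarrow> bool" where
  "is_filter P le z F \<longleftrightarrow> F \<subseteq> P \<and> F \<noteq> {} \<and> z \<notin> F \<and>
     (\<forall>x\<in>F. \<forall>y\<in>P. le x y \<longrightarrow> y \<in> F) \<and>
     (\<forall>x\<in>F. \<forall>y\<in>F. \<exists>w\<in>F. le w x \<and> le w y)"

definition ES_filter :: "'v set \<Rightarrow> 'e set \<Rightarrow> ('e \<Rightarrow> 'v) \<Rightarrow> ('e \<Rightarrow> 'v) \<Rightarrow> ('e \<Rightarrow> 'a) \<Rightarrow> 'v set set \<Rightarrow> ('a, 'v) selt set \<Rightarrow> bool" where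
  "ES_filter V Ed rg sc lab B \<xi> \<longleftrightarrow> is_filter (ES_set V Ed rg sc lab B) (ES_le Ed rg sc lab) None \<xi>"

definition B_filter :: "'v set set \<Rightarrow> 'v set set \<Rightarrow> bool" where
  "B_filter P F \<longleftrightarrow> is_filter P (\<subseteq>) {} F"

definition filter_words :: "('a, 'v) selt set \<Rightarrow> 'a list set" where
  "filter_words \<xi> = {b. \<exists>C. Some (b, C, b) \<in> \<xi>}"

definition finite_type :: "('a, 'v) selt set \<Rightarrow> bool" where
  "finite_type \<xi> \<longleftrightarrow> (\<exists>b\<in>filter_words \<xi>. \<forall>c\<in>filter_words \<xi>. length c \<le> length b)"

definition is_word_of :: "('a, 'v) selt set \<Rightarrow> 'a list \<Rightarrow> bool" where
  "is_word_of \<xi> a \<longleftrightarrow> a \<in> filter_words \<xi> \<and> (\<forall>c\<in>filter_words \<xi>. length c \<le> length a)"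

end

theory Submission
  imports Defs
begin

lemma path_take: "is_path Ed rg sc p \<Longrightarrow> 0 < k \<Longrightarrow> is_path Ed rg sc (take k p)"
  unfolding is_path_def by (auto dest: in_set_takeD)

lemma path_drop: "is_path Ed rg sc p \<Longrightarrow> k < length p \<Longrightarrow> is_path Ed rg sc (drop k p)"
  unfolding is_path_def by (auto dest: in_set_dropD)

lemma path_append:
  assumes a: "p \<noteq> [] \<and> set p \<subseteq> Ed \<and> (\<forall>i. Suc i < length p \<longrightarrow> rg (p ! i) = sc (p ! Suc i))"
    "q \<noteq> [] \<and> set q \<subseteq> Ed \<and> (\<forall>i. Suc i < length q \<longrightarrow> rg (q ! i) = sc (q ! Suc i))"
    "rg (last p) = sc (hd q)"
  shows "is_path Ed rg sc (p @ q)"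
  unfolding is_path_def
proof (intro conjI allI impI)
  fix i assume i: "Suc i < length (p @ q)"
  show "rg ((p @ q) ! i) = sc ((p @ q) ! Suc i)"
  proof (cases "Suc i < length p")
    case True then show ?thesis using a by (simp add: nth_append)
  next
    case False
    show ?thesis
    proof (cases "Suc i = length p")
      case True
      then have "i = length p - 1" by simp
      then have "p ! i = last p" using a by (simp add: last_conv_nth)
      moreover have "q ! 0 = hd q" using a by (simp add: hd_conv_nth)
      ultimately show ?thesis using a True by (simp add: nth_append)
    next
      case F2: False
      then have "i \<ge> length p" using False by simp
      then show ?thesis using a i F2 False
        by (simp add: nth_append Suc_diff_le)
    qed
  qed
qed (use a in auto)

lemma path_append': "is_path Ed rg sc p \<Longrightarrow> is_path Ed rg sc q \<Longrightarrow> rg (last p) = sc (hd q)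
   \<Longrightarrow> is_path Ed rg sc (p @ q)"
  by (rule path_append) (auto simp: is_path_def)

lemma relr_comp: "relr Ed rg sc lab (relr Ed rg sc lab A u) v = relr Ed rg sc lab A (u @ v)"
proof (cases "u = [] \<or> v = []")
  case True then show ?thesis by (auto simp: relr_def)
next
  case False
  show ?thesis
  proof
    show "relr Ed rg sc lab (relr Ed rg sc lab A u) v \<subseteq> relr Ed rg sc lab A (u @ v)"
    proof
      fix x assume "x \<in> relr Ed rg sc lab (relr Ed rg sc lab A u) v"
      then obtain q p where q: "x = rg (last q)" "is_path Ed rg sc q" "map lab q = v"
        "sc (hd q) = rg (last p)" and p: "is_path Ed rg sc p" "map lab p = u" "sc (hd p) \<in> A"
        using False by (auto simp: relr_def)
      have ne: "p \<noteq> []" "q \<noteq> []" using p q by (auto simp: is_path_def)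
      have "is_path Ed rg sc (p @ q)" using path_append' p q by metis
      then show "x \<in> relr Ed rg sc lab A (u @ v)" using False ne p q unfolding relr_def
        by (auto intro!: exI[of _ "p @ q"])
    qed
  next
    show "relr Ed rg sc lab A (u @ v) \<subseteq> relr Ed rg sc lab (relr Ed rg sc lab A u) v"
    proof
      fix x assume "x \<in> relr Ed rg sc lab A (u @ v)"
      then obtain p where p: "x = rg (last p)" "is_path Ed rg sc p" "map lab p = u @ v" "sc (hd p) \<in> A"
        using False by (auto simp: relr_def)
      define p1 where "p1 = take (length u) p"
      define p2 where "p2 = drop (length u) p"
      have len: "length p = length u + length v" using p(3) by (metis length_append length_map)
      have lu: "0 < length u" "length u < length p" using False len by auto
      have P1: "is_path Ed rg sc p1" unfolding p1_def using path_take p(2) lu by blast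
      have P2: "is_path Ed rg sc p2" unfolding p2_def using path_drop p(2) lu by blast
      have m1: "map lab p1 = u" unfolding p1_def using p(3) by (metis append_eq_conv_conj take_map)
      have m2: "map lab p2 = v" unfolding p2_def using p(3) by (metis append_eq_conv_conj drop_map)
      have h1: "hd p1 = hd p" unfolding p1_def using lu by simp
      have l2: "last p2 = last p" unfolding p2_def using lu by simp
      have "rg (p ! (length u - 1)) = sc (p ! length u)" using p(2) lu unfolding is_path_def by auto
      moreover have "last p1 = p ! (length u - 1)" unfolding p1_def using lu
        by (subst last_conv_nth) (auto simp: min_def)
      moreover have "hd p2 = p ! length u" unfolding p2_def using lu by (simp add: hd_drop_conv_nth)
      ultimately have j: "rg (last p1) = sc (hd p2)" by simp
      have "rg (last p1) \<in> relr Ed rg sc lab A u" using False P1 m1 h1 p(4) unfolding relr_def by auto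
      moreover have "x \<in> relr Ed rg sc lab Q v" if "sc (hd p2) \<in> Q" for Q
        using False P2 m2 l2 j p(1) that unfolding relr_def by auto
      ultimately show "x \<in> relr Ed rg sc lab (relr Ed rg sc lab A u) v" using j by simp
    qed
  qed
qed

lemma relr_mono: "A \<subseteq> A' \<Longrightarrow> relr Ed rg sc lab A w \<subseteq> relr Ed rg sc lab A' w"
  unfolding relr_def by auto

lemma relr_empty: "relr Ed rg sc lab {} w = {}"
  unfolding relr_def by auto

lemma Lstar_prefix: "u @ v \<in> Lstar Ed rg sc lab \<Longrightarrow> u \<in> Lstar Ed rg sc lab"
proof -
  assume a: "u @ v \<in> Lstar Ed rg sc lab"
  show ?thesis
  proof (cases "u = []")
    case True then show ?thesis by (simp add: Lstar_def)
  next
    case False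
    then obtain p where p: "is_path Ed rg sc p" "map lab p = u @ v" using a by (auto simp: Lstar_def Lplus_def)
    have "length u \<le> length p" using p(2) by (metis le_add1 length_append length_map)
    have "is_path Ed rg sc (take (length u) p)" by (rule path_take[OF p(1)]) (use False in simp)
    moreover have "map lab (take (length u) p) = u" using p(2) by (metis append_eq_conv_conj take_map)
    ultimately show ?thesis by (auto simp: Lstar_def Lplus_def)
  qed
qed

lemma Lstar_suffix: "u @ v \<in> Lstar Ed rg sc lab \<Longrightarrow> v \<noteq> [] \<Longrightarrow> v \<in> Lplus Ed rg sc lab"
proof -
  assume a: "u @ v \<in> Lstar Ed rg sc lab" and v: "v \<noteq> []"
  then obtain p where p: "is_path Ed rg sc p" "map lab p = u @ v" by (auto simp: Lstar_def Lplus_def)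
  have "length u < length p" using p(2) v by (metis length_append length_greater_0_conv length_map less_add_same_cancel1)
  then have "is_path Ed rg sc (drop (length u) p)" by (rule path_drop[OF p(1)])
  moreover have "map lab (drop (length u) p) = v" using p(2) by (metis append_eq_conv_conj drop_map)
  ultimately show ?thesis by (auto simp: Lplus_def)
qed

lemma ES_le_iff:
  "ES_le Ed rg sc lab (Some (a, A, a)) (Some (b, C, b)) \<longleftrightarrow>
     A \<noteq> {} \<and> (\<exists>h. a = b @ h \<and> A \<subseteq> relr Ed rg sc lab C h)"
proof
  assume le: "ES_le Ed rg sc lab (Some (a, A, a)) (Some (b, C, b))"
  show "A \<noteq> {} \<and> (\<exists>h. a = b @ h \<and> A \<subseteq> relr Ed rg sc lab C h)"
  proof (cases "\<exists>c'. b = a @ c'")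
    case True
    then obtain c' where c': "b = a @ c'" by blast
    from le True have "(let c' = drop (length a) b; D = relr Ed rg sc lab A c' \<inter> C in
         if D = {} then None else Some (a @ c', D, b)) = Some (a, A, a)"
      by (simp add: ES_le_def)
    then show ?thesis using c' by (auto simp: Let_def relr_def split: if_splits)
  next
    case False
    then have ex: "\<exists>b'. a = b @ b'" using le by (auto simp: ES_le_def split: if_splits)
    then obtain h where h: "a = b @ h" by blast
    from le False ex have "(let b' = drop (length b) a; D = A \<inter> relr Ed rg sc lab C b' in
         if D = {} then None else Some (a, D, b @ b')) = Some (a, A, a)"
      by (simp add: ES_le_def)
    then show ?thesis using h by (auto simp: Let_def split: if_splits)
  qed
next
  assume r: "A \<noteq> {} \<and> (\<exists>h. a = b @ h \<and> A \<subseteq> relr Ed rg sc lab C h)"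
  then obtain h where h: "a = b @ h" "A \<subseteq> relr Ed rg sc lab C h" "A \<noteq> {}" by blast
  show "ES_le Ed rg sc lab (Some (a, A, a)) (Some (b, C, b))"
  proof (cases "\<exists>c'. b = a @ c'")
    case True
    then have "h = []" "b = a" using h by auto
    then show ?thesis using h True by (auto simp: ES_le_def Let_def relr_def)
  next
    case False
    have e: "A \<inter> relr Ed rg sc lab C h = A" using h by auto
    show ?thesis using h False by (simp add: ES_le_def Let_def e)
  qed
qed

lemma ES_set_Some: "Some (a, A, a) \<in> ES_set V Ed rg sc lab B \<longleftrightarrow>
   a \<in> Lstar Ed rg sc lab \<and> A \<noteq> {} \<and> A \<in> B \<and> A \<subseteq> relr Ed rg sc lab V a"
  unfolding ES_set_def S_set_def Bsub_def by auto


theorem mainTheorem11: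
  fixes V :: "'v set" and Ed :: "'e set" and rg sc :: "'e \<Rightarrow> 'v" and lab :: "'e \<Rightarrow> 'a"
    and B :: "'v set set" and \<xi> :: "('a, 'v) selt set" and \<alpha> :: "'a list"
    and F :: "nat \<Rightarrow> 'v set set"
  assumes wlr: "weakly_left_resolving V Ed rg sc lab B"
    and filt: "ES_filter V Ed rg sc lab B \<xi>"
    and ft: "finite_type \<xi>"
    and word: "is_word_of \<xi> \<alpha>"
    and F_def: "\<And>n. F n = {A \<in> B. Some (take n \<alpha>, A, take n \<alpha>) \<in> \<xi>}"
  shows "(\<forall>n. 1 \<le> n \<and> n \<le> length \<alpha> \<longrightarrow> B_filter (Bsub V Ed rg sc lab B (take n \<alpha>)) (F n))
       \<and> (F 0 = {} \<or> B_filter B (F 0))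
       \<and> (\<forall>n m. n < m \<and> m \<le> length \<alpha> \<longrightarrow>
            F n = {A \<in> Bsub V Ed rg sc lab B (take n \<alpha>).
                     relr Ed rg sc lab A (drop n (take m \<alpha>)) \<in> F m})"
proof -
  let ?r = "relr Ed rg sc lab"
  let ?E = "ES_set V Ed rg sc lab B"
  let ?le = "ES_le Ed rg sc lab"
  have PV: "B \<subseteq> Pow V" and rB: "\<And>A w. A \<in> B \<Longrightarrow> w \<in> Lplus Ed rg sc lab \<Longrightarrow> ?r A w \<in> B"
    and intB: "\<And>A C. A \<in> B \<Longrightarrow> C \<in> B \<Longrightarrow> A \<inter> C \<in> B"
    and rVB: "\<And>w. w \<in> Lplus Ed rg sc lab \<Longrightarrow> ?r V w \<in> B"
    and wl: "\<And>A C w. A \<in> B \<Longrightarrow> C \<in> B \<Longrightarrow> w \<in> Lplus Ed rg sc lab \<Longrightarrow> ?r (A \<inter> C) w = ?r A w \<inter> ?r C w"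
    using wlr unfolding weakly_left_resolving_def labelled_space_def accommodating_def by blast+
  have sub: "\<xi> \<subseteq> ?E" and noN: "None \<notin> \<xi>"
    and up: "\<And>x y. x \<in> \<xi> \<Longrightarrow> y \<in> ?E \<Longrightarrow> ?le x y \<Longrightarrow> y \<in> \<xi>"
    and dir: "\<And>x y. x \<in> \<xi> \<Longrightarrow> y \<in> \<xi> \<Longrightarrow> \<exists>w\<in>\<xi>. ?le w x \<and> ?le w y"
    using filt unfolding ES_filter_def is_filter_def by blast+
  have elt: "\<exists>g W. w = Some (g, W, g)" if "w \<in> \<xi>" for w
    using that sub noN unfolding ES_set_def by blast
  obtain C0 where C0: "Some (\<alpha>, C0, \<alpha>) \<in> \<xi>" using word unfolding is_word_of_def filter_words_def by blast
  then have C0E: "\<alpha> \<in> Lstar Ed rg sc lab" "C0 \<noteq> {}" "C0 \<subseteq> ?r V \<alpha>"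
  proof -
    have "Some (\<alpha>, C0, \<alpha>) \<in> ?E" using C0 sub by blast
    then show "\<alpha> \<in> Lstar Ed rg sc lab" "C0 \<noteq> {}" "C0 \<subseteq> ?r V \<alpha>" unfolding ES_set_Some by auto
  qed
  have tL: "take n \<alpha> \<in> Lstar Ed rg sc lab" for n
    using Lstar_prefix[of "take n \<alpha>" "drop n \<alpha>"] C0E by simp
  have tLp: "take n \<alpha> \<in> Lplus Ed rg sc lab" if "1 \<le> n" "n \<le> length \<alpha>" for n
    using Lstar_suffix[of "[]" "take n \<alpha>"] tL[of n] that by (auto simp: Lstar_def)
  have inxi: "A \<noteq> {} \<and> A \<in> B \<and> A \<subseteq> ?r V a" if "Some (a, A, a) \<in> \<xi>" for a A
  proof -
    have "Some (a, A, a) \<in> ?E" using that sub by blast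
    then show ?thesis unfolding ES_set_Some by auto
  qed
  have Fsub: "F n \<subseteq> Bsub V Ed rg sc lab B (take n \<alpha>)" for n
    using inxi by (auto simp: F_def Bsub_def)
  have Fne: "{} \<notin> F n" for n
    using inxi by (auto simp: F_def)
  have Fup: "C \<in> F n" if "A \<in> F n" "C \<in> Bsub V Ed rg sc lab B (take n \<alpha>)" "A \<subseteq> C" for n A C
  proof -
    have A: "Some (take n \<alpha>, A, take n \<alpha>) \<in> \<xi>" "A \<noteq> {}" using that(1) Fne[of n] by (auto simp: F_def)
    have "Some (take n \<alpha>, C, take n \<alpha>) \<in> ?E" using that A tL by (auto simp: ES_set_Some Bsub_def)
    moreover have "?le (Some (take n \<alpha>, A, take n \<alpha>)) (Some (take n \<alpha>, C, take n \<alpha>))"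
      using A that(3) by (auto simp: ES_le_iff relr_def intro!: exI[of _ "[]"])
    ultimately show ?thesis using up A that(2) by (auto simp: F_def Bsub_def)
  qed
  have Fint: "A \<inter> A' \<in> F n" if "A \<in> F n" "A' \<in> F n" for n A A'
  proof -
    let ?t = "take n \<alpha>"
    have A: "Some (?t, A, ?t) \<in> \<xi>" "Some (?t, A', ?t) \<in> \<xi>" "A \<in> B" "A' \<in> B" "A \<subseteq> ?r V ?t"
      using that Fsub[of n] by (auto simp: F_def Bsub_def)
    obtain w where w: "w \<in> \<xi>" "?le w (Some (?t, A, ?t))" "?le w (Some (?t, A', ?t))"
      using dir[OF A(1,2)] by blast
    obtain g W where gW: "w = Some (g, W, g)" using elt w(1) by blast
    obtain h where h: "g = ?t @ h" "W \<subseteq> ?r A h" "W \<subseteq> ?r A' h" "W \<noteq> {}"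
      using w(2,3) unfolding gW ES_le_iff by auto
    have gL: "g \<in> Lstar Ed rg sc lab" using w(1) sub gW by (auto simp: ES_set_Some)
    have "?r (A \<inter> A') h = ?r A h \<inter> ?r A' h"
    proof (cases "h = []")
      case True then show ?thesis by (simp add: relr_def)
    next
      case False
      have "h \<in> Lplus Ed rg sc lab" using Lstar_suffix[of ?t h Ed rg sc lab] gL h(1) False by simp
      then show ?thesis using wl A(3,4) by blast
    qed
    then have W: "W \<subseteq> ?r (A \<inter> A') h" using h by auto
    then have ne: "A \<inter> A' \<noteq> {}" using h(4) relr_empty by fastforce
    have "Some (?t, A \<inter> A', ?t) \<in> ?E" using ne A tL intB by (auto simp: ES_set_Some)
    moreover have "?le w (Some (?t, A \<inter> A', ?t))" using W h unfolding gW ES_le_iff by auto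
    ultimately show ?thesis using up w(1) A intB by (auto simp: F_def)
  qed
  have Fnonempty: "F n \<noteq> {}" if "1 \<le> n" "n \<le> length \<alpha>" for n
  proof -
    let ?t = "take n \<alpha>"
    let ?D = "?r V ?t"
    have DB: "?D \<in> B" using rVB tLp that by blast
    have "?r ?D (drop n \<alpha>) = ?r V \<alpha>" by (simp add: relr_comp)
    then have CD: "C0 \<subseteq> ?r ?D (drop n \<alpha>)" using C0E by simp
    then have "?D \<noteq> {}" using C0E relr_empty by fastforce
    then have "Some (?t, ?D, ?t) \<in> ?E" using DB tL by (auto simp: ES_set_Some)
    moreover have "?le (Some (\<alpha>, C0, \<alpha>)) (Some (?t, ?D, ?t))"
      unfolding ES_le_iff using CD C0E by (auto intro!: exI[of _ "drop n \<alpha>"])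
    ultimately have "?D \<in> F n" using up C0 DB by (auto simp: F_def)
    then show ?thesis by blast
  qed
  have filt_n: "B_filter (Bsub V Ed rg sc lab B (take n \<alpha>)) (F n)" if "F n \<noteq> {}" for n
    unfolding B_filter_def is_filter_def
    using that Fsub[of n] Fne[of n] Fup[of _ n] Fint[of _ n]
    by (metis Int_lower1 Int_lower2)
  have B0: "Bsub V Ed rg sc lab B (take 0 \<alpha>) = B" using PV by (auto simp: Bsub_def relr_def)
  have part3: "F n = {A \<in> Bsub V Ed rg sc lab B (take n \<alpha>). ?r A (drop n (take m \<alpha>)) \<in> F m}"
    if nm: "n < m" "m \<le> length \<alpha>" for n m
  proof -
    let ?tn = "take n \<alpha>" and ?tm = "take m \<alpha>" and ?g = "drop n (take m \<alpha>)"
    have tm: "?tm = ?tn @ ?g" using nm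
      by (metis append_take_drop_id less_imp_le_nat min.absorb1 take_take)
    have gne: "?g \<noteq> []" using nm by simp
    have gL: "?g \<in> Lplus Ed rg sc lab" using Lstar_suffix[of ?tn ?g] tm tL[of m] gne by simp
    show ?thesis
    proof (intro equalityI subsetI)
      fix A assume AF: "A \<in> F n"
      have A: "Some (?tn, A, ?tn) \<in> \<xi>" "A \<in> B" "A \<subseteq> ?r V ?tn"
        using AF Fsub[of n] by (auto simp: F_def Bsub_def)
      obtain D where D: "D \<in> F m" using Fnonempty[of m] nm by auto
      have D': "Some (?tm, D, ?tm) \<in> \<xi>" using D by (auto simp: F_def)
      obtain w where w: "w \<in> \<xi>" "?le w (Some (?tn, A, ?tn))" "?le w (Some (?tm, D, ?tm))"
        using dir[OF A(1) D'] by blast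
      obtain g W where gW: "w = Some (g, W, g)" using elt w(1) by blast
      obtain h1 where h1: "g = ?tn @ h1" "W \<subseteq> ?r A h1" "W \<noteq> {}"
        using w(2) unfolding gW ES_le_iff by auto
      obtain h2 where h2: "g = ?tm @ h2"
        using w(3) unfolding gW ES_le_iff by auto
      have h: "g = ?tn @ h1" "W \<subseteq> ?r A h1" "g = ?tm @ h2" "W \<noteq> {}" using h1 h2 by auto
      have "?tn @ h1 = ?tn @ (?g @ h2)" using h(1,3) tm by (metis append.assoc)
      then have "h1 = ?g @ h2" by simp
      then have W: "W \<subseteq> ?r (?r A ?g) h2" using h(2) by (simp add: relr_comp)
      then have ne: "?r A ?g \<noteq> {}" using h(4) relr_empty by fastforce
      have rAB: "?r A ?g \<in> B" using rB A(2) gL by blast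
      have "?r A ?g \<subseteq> ?r (?r V ?tn) ?g" using A(3) by (rule relr_mono)
      also have "\<dots> = ?r V ?tm" using tm by (simp add: relr_comp)
      finally have sub2: "?r A ?g \<subseteq> ?r V ?tm" .
      have "Some (?tm, ?r A ?g, ?tm) \<in> ?E" using ne rAB sub2 tL by (auto simp: ES_set_Some)
      moreover have "?le w (Some (?tm, ?r A ?g, ?tm))" using W h unfolding gW ES_le_iff by auto
      ultimately have "?r A ?g \<in> F m" using up w(1) rAB by (auto simp: F_def)
      then show "A \<in> {A \<in> Bsub V Ed rg sc lab B ?tn. ?r A ?g \<in> F m}" using AF Fsub[of n] by auto
    next
      fix A assume "A \<in> {A \<in> Bsub V Ed rg sc lab B ?tn. ?r A ?g \<in> F m}"
      then have A: "A \<in> B" "A \<subseteq> ?r V ?tn" "?r A ?g \<in> F m" by (auto simp: Bsub_def)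
      have xi: "Some (?tm, ?r A ?g, ?tm) \<in> \<xi>" and ne: "?r A ?g \<noteq> {}"
        using A(3) Fne[of m] by (auto simp: F_def)
      have "A \<noteq> {}" using ne relr_empty by fastforce
      then have "Some (?tn, A, ?tn) \<in> ?E" using A tL by (auto simp: ES_set_Some)
      moreover have "?le (Some (?tm, ?r A ?g, ?tm)) (Some (?tn, A, ?tn))"
        unfolding ES_le_iff using ne tm by auto
      ultimately show "A \<in> F n" using up xi A(1) by (auto simp: F_def)
    qed
  qed
  show ?thesis
    using filt_n Fnonempty part3 B0 by (metis (no_types, lifting))
qed

end
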